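(* For every integer $i\ge 0$, $\lim_{k\to\infty}\overline{\alpha}(\{1,k,k+2i+1\})=\frac{i+1}{2i+3}$.
   Context: For a finite set $S$ of positive integers, the distance graph $G(S)$ has vertex set $\mathbb{Z}$, with $i,j$ adjacent iff $|i-j|\in S$. The density of $A\subseteq\mathbb{Z}$ is $\delta(A)=\limsup_{N\to\infty}\frac{|A\cap[-N,N]|}{2N+1}$, and the independence ratio $\overline{\alpha}(S)$ is the supremum of $\delta(A)$ over independent sets $A$ of $G(S)$. *)

theory Defs
  imports "HOL-Analysis.Analysis" "HOL-Library.Liminf_Limsup"
begin

definition dist_adj :: "nat set \<Rightarrow> int \<Rightarrow> int \<Rightarrow> bool" where
  "dist_adj S i j \<longleftrightarrow> nat \<bar>i - j\<bar> \<in> S \<and> \<bar>i - j\<bar> > 0"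

definition indep_set :: "nat set \<Rightarrow> int set \<Rightarrow> bool" where
  "indep_set S A \<longleftrightarrow> (\<forall>i\<in>A. \<forall>j\<in>A. \<not> dist_adj S i j)"

definition density :: "int set \<Rightarrow> ereal" where
  "density A = limsup (\<lambda>N::nat. ereal (real (card (A \<inter> {-int N..int N})) / real (2*N+1)))"

definition indep_ratio :: "nat set \<Rightarrow> ereal" where
  "indep_ratio S = (SUP A\<in>{A. indep_set S A}. density A)"

end

theory Submission
  imports Defs
begin


lemma pair_le:
  assumes "indep_set S A" "nat \<bar>x - y\<bar> \<in> S" "x \<noteq> y"
  shows "of_bool (x\<in>A) + of_bool (y\<in>A) \<le> (1::nat)"
  using assms unfolding indep_set_def dist_adj_def by auto

lemma cycle_bound:
  fixes i k :: nat and x :: int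
  assumes "k \<ge> 1" "indep_set {1, k, k + 2*i + 1} A"
  shows "(\<Sum>j<Suc (2*i+1). (of_bool (x + int j \<in> A)::nat)) + of_bool (x + int (2*i+1) + int k \<in> A) \<le> i + 1"
proof -
  define m where "m = 2*i+1"
  define F where "F j = (of_bool (x + int j \<in> A)::nat)" for j
  define E where "E = (of_bool (x + int m + int k \<in> A)::nat)"
  let ?S = "{1, k, k + 2*i + 1}"
  have e1: "F j + F (Suc j) \<le> 1" for j
    unfolding F_def by (rule pair_le[OF assms(2)]) auto
  have e2: "F m + E \<le> 1"
    unfolding F_def E_def using assms(1) by (intro pair_le[OF assms(2)]) auto
  have e3: "F 0 + E \<le> 1"
    unfolding F_def E_def using assms(1) by (intro pair_le[OF assms(2)]) (auto simp: m_def nat_add_distrib)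
  have s1: "(\<Sum>j<m. F j + F (Suc j)) \<le> m"
    using sum_mono[of "{..<m}" "\<lambda>j. F j + F (Suc j)" "\<lambda>_. 1"] e1 by simp
  have a: "(\<Sum>j<Suc m. F j) = (\<Sum>j<m. F j) + F m" by simp
  have b: "(\<Sum>j<Suc m. F j) = F 0 + (\<Sum>j<m. F (Suc j))" by (rule sum.lessThan_Suc_shift)
  have c: "(\<Sum>j<m. F j + F (Suc j)) = (\<Sum>j<m. F j) + (\<Sum>j<m. F (Suc j))" by (rule sum.distrib)
  have "2 * ((\<Sum>j<Suc m. F j) + E) = (\<Sum>j<m. F j + F (Suc j)) + (F m + E) + (F 0 + E)"
    unfolding c using a b by (simp only: mult_2 add_ac)
  also have "\<dots> \<le> m + 2" using s1 e2 e3 by simp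
  finally have "2 * ((\<Sum>j<Suc m. F j) + E) \<le> 2*i+3" by (simp add: m_def)
  hence "(\<Sum>j<Suc m. F j) + E \<le> i+1" by simp
  thus ?thesis by (simp add: F_def E_def m_def)
qed

lemma shift_step:
  fixes h :: "int \<Rightarrow> nat"
  assumes "\<And>y. h y \<le> 1"
  shows "(\<Sum>x\<in>{a..b}. h x) \<le> (\<Sum>x\<in>{a..b}. h (x+1)) + 1"
proof (cases "a \<le> b")
  case True
  have r: "(\<Sum>x\<in>{a..b}. h (x+1)) = (\<Sum>y\<in>{a+1..b+1}. h y)"
    by (rule sum.reindex_bij_witness[of _ "\<lambda>y. y - 1" "\<lambda>x. x + 1"]) auto
  have "(\<Sum>x\<in>{a..b}. h x) \<le> (\<Sum>x\<in>insert a {a+1..b+1}. h x)"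
    by (rule sum_mono2) auto
  also have "\<dots> = h a + (\<Sum>x\<in>{a+1..b+1}. h x)" by (subst sum.insert) auto
  finally show ?thesis using r assms[of a] by simp
qed simp

lemma shift_le:
  fixes h :: "int \<Rightarrow> nat"
  assumes "\<And>y. h y \<le> 1"
  shows "(\<Sum>x\<in>{a..b}. h x) \<le> (\<Sum>x\<in>{a..b}. h (x + int d)) + d"
proof (induction d)
  case 0 then show ?case by simp
next
  case (Suc d)
  have "(\<Sum>x\<in>{a..b}. h (x + int d)) \<le> (\<Sum>x\<in>{a..b}. h (x + 1 + int d)) + 1"
    using shift_step[of "\<lambda>x. h (x + int d)" a b] assms by simp
  then show ?case using Suc by (simp add: add_ac)
qed

lemma count_bound:
  fixes i k N :: nat
  assumes "k \<ge> 1" "indep_set {1, k, k + 2*i + 1} A"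
  shows "(2*i+3) * card (A \<inter> {-int N..int N}) \<le> (i+1)*(2*N+1) + ((\<Sum>j<Suc (2*i+1). j) + (2*i+1+k))"
proof -
  define m where "m = 2*i+1"
  define W where "W = {-int N..int N}"
  define g where "g y = (of_bool (y \<in> A)::nat)" for y
  have g1: "g y \<le> 1" for y by (simp add: g_def)
  have cW: "card W = 2*N+1" by (simp add: W_def)
  have SW: "(\<Sum>x\<in>W. g x) = card (A \<inter> W)"
    by (simp add: g_def sum_of_bool_eq W_def Int_commute Collect_mem_eq)
  have "(\<Sum>x\<in>W. (\<Sum>j<Suc m. g (x + int j)) + g (x + int m + int k)) \<le> (\<Sum>x\<in>W. i+1)"
    by (rule sum_mono) (use cycle_bound[OF assms] in \<open>simp add: g_def m_def\<close>)
  also have "\<dots> = (i+1)*(2*N+1)" using cW by simp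
  finally have A1: "(\<Sum>j<Suc m. (\<Sum>x\<in>W. g (x + int j))) + (\<Sum>x\<in>W. g (x + int (m + k))) \<le> (i+1)*(2*N+1)"
    by (simp add: sum.distrib sum.swap[of _ W] add_ac)
  have sh: "card (A \<inter> W) \<le> (\<Sum>x\<in>W. g (x + int j)) + j" for j
    using shift_le[where h=g and a="-int N" and b="int N" and d=j, OF g1] SW by (simp add: W_def)
  have "(\<Sum>j<Suc m. card (A \<inter> W)) \<le> (\<Sum>j<Suc m. (\<Sum>x\<in>W. g (x + int j)) + j)"
    by (rule sum_mono) (rule sh)
  also have "\<dots> = (\<Sum>j<Suc m. (\<Sum>x\<in>W. g (x + int j))) + (\<Sum>j<Suc m. j)" by (simp add: sum.distrib)
  finally have A2: "Suc m * card (A \<inter> W) \<le> (\<Sum>j<Suc m. (\<Sum>x\<in>W. g (x + int j))) + (\<Sum>j<Suc m. j)" by simp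
  have A3: "card (A \<inter> W) \<le> (\<Sum>x\<in>W. g (x + int (m + k))) + (m+k)"
    by (rule sh)
  have "(2*i+3) * card (A \<inter> W) = Suc m * card (A \<inter> W) + card (A \<inter> W)" by (simp add: m_def algebra_simps)
  also have "\<dots> \<le> (i+1)*(2*N+1) + ((\<Sum>j<Suc m. j) + (m+k))" using A1 A2 A3 by linarith
  finally show ?thesis by (simp add: W_def m_def)
qed


lemma lim0: "((\<lambda>N::nat. C / (P * (2*real N+1))) \<longlonglongrightarrow> (0::real))"
proof -
  have sm: "strict_mono (\<lambda>N::nat. 2*N)" by (auto simp: strict_mono_def)
  have "(\<lambda>N. inverse (real (Suc (2*N)))) \<longlonglongrightarrow> 0"
    using LIMSEQ_subseq_LIMSEQ[OF LIMSEQ_inverse_real_of_nat sm] by (simp add: o_def)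
  hence "(\<lambda>N. (C/P) * inverse (real (Suc (2*N)))) \<longlonglongrightarrow> 0"
    by (rule tendsto_mult_right_zero)
  moreover have "C / (P * (2*real N+1)) = (C/P) * inverse (real (Suc (2*N)))" for N
    by (simp add: divide_inverse inverse_mult_distrib mult.assoc add.commute)
  ultimately show ?thesis by simp
qed

lemma aux_div:
  fixes P D x Y :: real
  assumes "P > 0" "D > 0" "P * x \<le> Y"
  shows "x / D \<le> Y / (P * D)"
proof -
  have "x / D = (P*x) / (P*D)" using assms by simp
  also have "\<dots> \<le> Y / (P*D)" by (rule divide_right_mono) (use assms in auto)
  finally show ?thesis .
qed

lemma upper:
  fixes i k :: nat
  assumes "k \<ge> 1"
  shows "indep_ratio {1, k, k + 2*i + 1} \<le> ereal ((real i + 1) / (2 * real i + 3))"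
  unfolding indep_ratio_def
proof (rule SUP_least)
  fix A assume "A \<in> {A. indep_set {1, k, k + 2*i + 1} A}"
  hence ind: "indep_set {1, k, k + 2*i + 1} A" by simp
  define C where "C = real ((\<Sum>j<Suc (2*i+1). j) + (2*i+1+k))"
  define P where "P = 2 * real i + 3"
  define L where "L = (real i + 1) / (2 * real i + 3)"
  have P0: "P > 0" by (simp add: P_def)
  have le: "real (card (A \<inter> {-int N..int N})) / real (2*N+1) \<le> L + C / (P * (2*real N+1))" for N
  proof -
    have "real ((2*i+3) * card (A \<inter> {-int N..int N})) \<le> real ((i+1)*(2*N+1) + ((\<Sum>j<Suc (2*i+1). j) + (2*i+1+k)))"
      using count_bound[OF assms ind, of N] by linarith
    hence h: "P * real (card (A \<inter> {-int N..int N})) \<le> (real i + 1) * (2 * real N + 1) + C"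
      by (simp add: P_def C_def algebra_simps)
    have "L + C / (P * (2*real N+1)) = ((real i + 1) * (2 * real N + 1) + C) / (P * (2*real N+1))"
    proof -
      have "(real i + 1) * (2 * real N + 1) / (P * (2*real N+1)) = L"
        unfolding L_def P_def by (rule mult_divide_mult_cancel_right) simp
      thus ?thesis by (simp add: add_divide_distrib)
    qed
    moreover have "real (card (A \<inter> {-int N..int N})) / real (2*N+1) \<le> ((real i + 1) * (2 * real N + 1) + C) / (P * (2*real N+1))"
      using aux_div[OF P0 _ h, of "real (2*N+1)"] by (simp add: add.commute)
    ultimately show ?thesis by simp
  qed
  have lim: "(\<lambda>N. ereal (L + C / (P * (2*real N+1)))) \<longlonglongrightarrow> ereal L"
    using tendsto_add[OF tendsto_const lim0[of C P]] by simp
  have "density A \<le> limsup (\<lambda>N. ereal (L + C / (P * (2*real N+1))))"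
    unfolding density_def by (rule Limsup_mono) (use le in auto)
  also have "\<dots> = ereal L" by (rule lim_imp_Limsup[OF _ lim]) simp
  finally show "density A \<le> ereal ((real i + 1) / (2 * real i + 3))" by (simp add: L_def)
qed


lemma modkey:
  fixes q r a d x c :: int
  assumes "q > 0" "0 \<le> r" "r \<le> (a*d) mod q" "(a*d) mod q \<le> q - r"
    "(a*x+c) mod q < r" "(a*(x+d)+c) mod q < r"
  shows False
proof -
  define u where "u = (a*x+c) mod q"
  define w where "w = (a*d) mod q"
  have "(a*(x+d)+c) mod q = ((a*x+c) + a*d) mod q" by (simp add: algebra_simps)
  also have "\<dots> = (u + w) mod q" unfolding u_def w_def by (simp add: mod_add_eq)
  finally have e: "(a*(x+d)+c) mod q = (u + w) mod q" .
  have "0 \<le> u" using assms(1) by (simp add: u_def)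
  moreover have "u < r" using assms(5) by (simp add: u_def)
  ultimately have "(u + w) mod q = u + w" using assms(1-4) unfolding w_def
    by (intro mod_pos_pos_trivial) auto
  thus False using e assms(6) \<open>0 \<le> u\<close> assms(3) unfolding w_def by linarith
qed

lemma indep_Ac:
  fixes q r a c :: int
  assumes "q > 0" "0 \<le> r"
    and H: "\<And>n. n \<in> S \<Longrightarrow> n > 0 \<Longrightarrow> r \<le> (a * int n) mod q \<and> (a * int n) mod q \<le> q - r"
  shows "indep_set S {x. (a*x+c) mod q < r}"
  unfolding indep_set_def dist_adj_def
proof (intro ballI notI)
  fix x y assume x: "x \<in> {x. (a*x+c) mod q < r}" and y: "y \<in> {x. (a*x+c) mod q < r}"
    and h: "nat \<bar>x - y\<bar> \<in> S \<and> 0 < \<bar>x - y\<bar>"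
  define n where "n = nat \<bar>x - y\<bar>"
  have n: "n \<in> S" "n > 0" using h by (auto simp: n_def)
  have ni: "int n = \<bar>x - y\<bar>" by (simp add: n_def)
  note Hn = H[OF n]
  show False
  proof (cases "x \<le> y")
    case True
    hence "y = x + int n" using ni by simp
    thus False using modkey[OF assms(1,2), of a "int n" x c] Hn x y by auto
  next
    case False
    hence "x = y + int n" using ni by simp
    thus False using modkey[OF assms(1,2), of a "int n" y c] Hn x y by auto
  qed
qed

lemma count_res:
  fixes q r b :: int
  assumes "0 \<le> r" "r \<le> q"
  shows "card {c\<in>{0..<q}. (b+c) mod q < r} = nat r"
proof -
  have q: "q > 0 \<or> r = 0" using assms by auto
  have eq: "{c\<in>{0..<q}. (b+c) mod q < r} = (\<lambda>y. (y-b) mod q) ` {0..<r}"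
  proof (rule set_eqI, rule iffI)
    fix c assume "c \<in> {c\<in>{0..<q}. (b+c) mod q < r}"
    hence c: "0 \<le> c" "c < q" "(b+c) mod q < r" by auto
    have "c = ((b+c) mod q - b) mod q"
      using c by (simp add: mod_diff_left_eq mod_pos_pos_trivial)
    moreover have "(b+c) mod q \<in> {0..<r}" using c by auto
    ultimately show "c \<in> (\<lambda>y. (y-b) mod q) ` {0..<r}" by blast
  next
    fix c assume "c \<in> (\<lambda>y. (y-b) mod q) ` {0..<r}"
    then obtain y where y: "0 \<le> y" "y < r" "c = (y-b) mod q" by auto
    have "(b+c) mod q = y"
      using y assms by (simp add: mod_add_right_eq mod_pos_pos_trivial)
    thus "c \<in> {c\<in>{0..<q}. (b+c) mod q < r}" using y assms by auto
  qed
  have inj: "inj_on (\<lambda>y. (y-b) mod q) {0..<r}"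
  proof (rule inj_onI)
    fix y z assume "y \<in> {0..<r}" "z \<in> {0..<r}" "(y-b) mod q = (z-b) mod q"
    hence "((y-b) mod q + b) mod q = ((z-b) mod q + b) mod q" by simp
    hence "y mod q = z mod q" by (simp add: mod_add_left_eq)
    thus "y = z" using \<open>y \<in> _\<close> \<open>z \<in> _\<close> assms by (simp add: mod_pos_pos_trivial)
  qed
  show ?thesis unfolding eq by (simp add: card_image[OF inj])
qed

lemma sum_res:
  fixes q r a :: int and W :: "int set"
  assumes "finite W" "0 \<le> r" "r \<le> q"
  shows "(\<Sum>c\<in>{0..<q}. card ({x. (a*x+c) mod q < r} \<inter> W)) = card W * nat r"
proof -
  have "(\<Sum>c\<in>{0..<q}. card ({x. (a*x+c) mod q < r} \<inter> W))
      = (\<Sum>c\<in>{0..<q}. \<Sum>x\<in>W. (of_bool ((a*x+c) mod q < r)::nat))"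
    using assms(1) by (simp add: sum_of_bool_eq Int_commute)
  also have "\<dots> = (\<Sum>x\<in>W. \<Sum>c\<in>{0..<q}. (of_bool ((a*x+c) mod q < r)::nat))"
    by (rule sum.swap)
  also have "\<dots> = (\<Sum>x\<in>W. nat r)"
  proof (rule sum.cong[OF refl])
    fix x
    have "(\<Sum>c\<in>{0..<q}. (of_bool ((a*x+c) mod q < r)::nat)) = card ({0..<q} \<inter> {c. (a*x+c) mod q < r})"
      using sum_of_bool_eq[of "{0..<q}" "\<lambda>c. (a*x+c) mod q < r"] by simp
    also have "{0..<q} \<inter> {c. (a*x+c) mod q < r} = {c\<in>{0..<q}. (a*x+c) mod q < r}" by auto
    finally show "(\<Sum>c\<in>{0..<q}. (of_bool ((a*x+c) mod q < r)::nat)) = nat r"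
      using count_res[OF assms(2,3), of "a*x"] by simp
  qed
  finally show ?thesis by simp
qed



lemma freq_le_limsup:
  fixes X :: "nat \<Rightarrow> ereal"
  assumes "frequently (\<lambda>N. c \<le> X N) sequentially"
  shows "c \<le> limsup X"
  unfolding Limsup_def
proof (rule INF_greatest)
  fix P assume "P \<in> {P. eventually P sequentially}"
  hence ev: "eventually P sequentially" by simp
  have "\<exists>x. P x \<and> c \<le> X x"
  proof (rule ccontr)
    assume "\<not> ?thesis"
    hence "eventually (\<lambda>x. \<not> c \<le> X x) sequentially" using ev by (rule_tac eventually_mono[OF ev]) auto
    thus False using assms by (simp add: frequently_def)
  qed
  then obtain x where "P x" "c \<le> X x" by blast
  thus "c \<le> (SUP x\<in>Collect P. X x)" by (intro SUP_upper2[of x]) auto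
qed

lemma avg_density:
  fixes B :: "'c \<Rightarrow> int set" and C :: "'c set" and \<rho> :: real
  assumes fin: "finite C" and ne: "C \<noteq> {}"
    and H: "\<And>N. \<rho> * real (card C) * real (2*N+1) \<le> real (\<Sum>c\<in>C. card (B c \<inter> {-int N..int N}))"
  shows "\<exists>c\<in>C. ereal \<rho> \<le> density (B c)"
proof -
  define Q where "Q c N \<longleftrightarrow> \<rho> * real (2*N+1) \<le> real (card (B c \<inter> {-int N..int N}))" for c N
  have ex: "\<exists>c\<in>C. Q c N" for N
  proof (rule ccontr)
    assume "\<not> ?thesis"
    hence lt: "\<And>c. c \<in> C \<Longrightarrow> real (card (B c \<inter> {-int N..int N})) < \<rho> * real (2*N+1)"
      by (auto simp: Q_def)
    have "(\<Sum>c\<in>C. real (card (B c \<inter> {-int N..int N}))) < (\<Sum>c\<in>C. \<rho> * real (2*N+1))"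
      by (rule sum_strict_mono[OF fin ne lt])
    also have "\<dots> = \<rho> * real (card C) * real (2*N+1)" by simp
    finally show False using H[of N] by (simp add: of_nat_sum)
  qed
  have "\<exists>c\<in>C. frequently (Q c) sequentially"
  proof (rule ccontr)
    assume "\<not> ?thesis"
    hence "\<forall>c\<in>C. eventually (\<lambda>N. \<not> Q c N) sequentially" by (simp add: not_frequently)
    hence "eventually (\<lambda>N. \<forall>c\<in>C. \<not> Q c N) sequentially" by (rule eventually_ball_finite[OF fin])
    then obtain N0 where "\<And>n. n \<ge> N0 \<Longrightarrow> \<forall>c\<in>C. \<not> Q c n" by (auto simp: eventually_sequentially)
    thus False using ex[of N0] by auto
  qed
  then obtain c where c: "c \<in> C" "frequently (Q c) sequentially" by blast
  have "frequently (\<lambda>N. ereal \<rho> \<le> ereal (real (card (B c \<inter> {-int N..int N})) / real (2*N+1))) sequentially"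
    using c(2) by (rule frequently_elim1) (simp add: Q_def pos_le_divide_eq)
  hence "ereal \<rho> \<le> density (B c)" unfolding density_def by (rule freq_le_limsup)
  thus ?thesis using c(1) by blast
qed



lemma lower:
  fixes i k :: nat
  assumes kb: "k \<ge> (2*i+1)*(2*i+3)"
  shows "ereal (real_of_int ((int i+1)*int k - (2*int i+1)*(2*int i+2)) / real_of_int ((2*int i+3)*int k))
           \<le> indep_ratio {1, k, k + 2*i + 1}"
proof -
  define I where "I = int i"
  define K where "K = int k"
  define p where "p = 2*I+3"
  define m where "m = 2*I+1"
  define q where "q = p*K"
  define s where "s = ((I+1)*(1-K)) mod p"
  define a where "a = (I+1)*K + s"
  define r where "r = (I+1)*K - m*(p-1)"
  have I0: "I \<ge> 0" by (simp add: I_def)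
  have p0: "p > 0" "p \<ge> 3" by (auto simp: p_def I_def)
  have m1: "m \<ge> 1" by (simp add: m_def I_def)
  have "int ((2*i+1)*(2*i+3)) \<le> K" using kb unfolding K_def by (simp only: of_nat_le_iff)
  hence Kb: "K \<ge> m*p" by (simp add: m_def p_def I_def algebra_simps)
  have mp: "m*p \<ge> p" using m1 p0 by simp
  have K0: "K > 0" using Kb mp p0 by linarith
  have s0: "0 \<le> s" "s < p" using p0 by (auto simp: s_def)
  have ms: "m * s \<le> m*(p-1)" using s0 m1 by (intro mult_left_mono) auto
  have mp1: "m*(p-1) < m*p" using m1 by (simp add: algebra_simps)
  have IK: "K \<le> (I+1)*K" using I0 K0 by (simp add: algebra_simps)
  have r0: "0 \<le> r" unfolding r_def using ms mp1 Kb IK by linarith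
  have rq: "q - r = (I+2)*K + m*(p-1)" by (simp add: q_def r_def p_def algebra_simps)
  have q0: "q > 0" using p0 K0 by (simp add: q_def)
  have rleq: "r \<le> q"
  proof -
    have "0 \<le> (I+2)*K" "0 \<le> m*(p-1)" using I0 K0 m1 p0 by simp_all
    thus ?thesis using rq by linarith
  qed
  obtain D where D: "(I+1)*(1-K) = p*D + s"
    using div_mult_mod_eq[of "(I+1)*(1-K)" p] unfolding s_def by (metis add.commute mult.commute)
  have sD: "s = (I+1)*(1-K) - p*D" using D by linarith
  have aeq: "a = (I+1) - p*D" unfolding a_def sD by (simp add: algebra_simps)
  have sK: "s < K" using s0 Kb mp by linarith
  have qa: "q = a + (I+1)*K + K - s" by (simp add: a_def q_def p_def algebra_simps)
  have a0: "0 \<le> a" unfolding a_def using I0 K0 s0 by simp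
  have c1: "(a*1) mod q = a"
    using mod_pos_pos_trivial[OF a0, of q] qa IK sK K0 by simp
  have hm: "0 \<le> m*(p-1)" using m1 p0 by simp
  have e2K: "(I+2)*K = (I+1)*K + K" by (simp add: algebra_simps)
  have qK: "q = (I+1)*K + (I+2)*K" by (simp add: q_def p_def algebra_simps)
  have ra: "r \<le> a" unfolding r_def a_def using hm s0 by linarith
  have aq: "a \<le> q - r" unfolding rq unfolding a_def using e2K hm sK by linarith
  have b1: "r \<le> (a*1) mod q \<and> (a*1) mod q \<le> q - r"
    using c1 ra aq by simp
  have "a*K = (I+1)*K + (-D)*q" unfolding aeq q_def by (simp add: algebra_simps)
  hence "(a*K) mod q = ((I+1)*K + (-D)*q) mod q" by (simp only:)
  also have "\<dots> = ((I+1)*K) mod q" by (rule mod_mult_self1)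
  also have "\<dots> = (I+1)*K"
    by (rule mod_pos_pos_trivial) (use I0 K0 in simp, use IK K0 qK e2K in linarith)
  finally have c2: "(a*K) mod q = (I+1)*K" .
  have b2: "r \<le> (a*K) mod q \<and> (a*K) mod q \<le> q - r"
    unfolding c2 rq unfolding r_def using hm e2K K0 by linarith
  have mI: "m*(I+1) = I*p + 1" by (simp add: m_def p_def algebra_simps)
  have "a*(K+m) = a*K + m*((I+1)*K + s)" by (simp add: a_def algebra_simps)
  also have "\<dots> = (I+1)*K + (-D)*q + (m*(I+1))*K + m * s"
    by (simp add: aeq q_def algebra_simps)
  also have "\<dots> = ((I+2)*K + m * s) + (I - D)*q" unfolding mI by (simp add: q_def algebra_simps)
  finally have e3: "a*(K+m) = ((I+2)*K + m * s) + (I - D)*q" .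
  have lt3: "(I+2)*K + m * s < q"
  proof -
    have "m * s < K" using ms mp1 Kb by linarith
    also have "K \<le> (I+1)*K" by (rule IK)
    finally show ?thesis by (simp add: q_def p_def algebra_simps)
  qed
  have ge3: "0 \<le> (I+2)*K + m * s" using I0 K0 s0 m1 by simp
  have c3: "(a*(K+m)) mod q = (I+2)*K + m * s"
    unfolding e3 using mod_pos_pos_trivial[OF ge3 lt3] by simp
  have b3: "r \<le> (a*(K+m)) mod q \<and> (a*(K+m)) mod q \<le> q - r"
  proof -
    have "0 \<le> m * s" using m1 s0 by simp
    thus ?thesis unfolding c3 rq unfolding r_def using ms hm e2K K0 by linarith
  qed
  have H: "r \<le> (a * int n) mod q \<and> (a * int n) mod q \<le> q - r" if "n \<in> {1, k, k + 2*i + 1}" for n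
  proof -
    have "int n = 1 \<or> int n = K \<or> int n = K + m" using that by (auto simp: K_def m_def I_def)
    thus ?thesis using b1 b2 b3 by auto
  qed
  have ind: "indep_set {1, k, k + 2*i + 1} {x. (a*x+c) mod q < r}" for c
    by (rule indep_Ac[OF q0 r0 H])
  define \<rho> where "\<rho> = real_of_int r / real_of_int q"
  have "\<exists>c\<in>{0..<q}. ereal \<rho> \<le> density {x. (a*x+c) mod q < r}"
  proof (rule avg_density)
    show "finite {0..<q}" by simp
    show "{0..<q} \<noteq> {}" using q0 by simp
    fix N
    have "(\<Sum>c\<in>{0..<q}. card ({x. (a*x+c) mod q < r} \<inter> {-int N..int N})) = (2*N+1) * nat r"
    proof -
      have cw: "nat (2 * int N + 1) = 2*N+1" by arith
      show ?thesis using sum_res[OF _ r0 rleq, of "{-int N..int N}" a] by (simp add: cw)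
    qed
    moreover have "\<rho> * real (card {0..<q}) = real (nat r)"
      using q0 r0 by (simp add: \<rho>_def)
    ultimately show "\<rho> * real (card {0..<q}) * real (2*N+1) \<le> real (\<Sum>c\<in>{0..<q}. card ({x. (a*x+c) mod q < r} \<inter> {-int N..int N}))"
      by (simp add: algebra_simps)
  qed
  then obtain c where c: "ereal \<rho> \<le> density {x. (a*x+c) mod q < r}" by blast
  also have "\<dots> \<le> indep_ratio {1, k, k + 2*i + 1}"
    unfolding indep_ratio_def by (rule SUP_upper) (use ind in simp)
  finally have "ereal \<rho> \<le> indep_ratio {1, k, k + 2*i + 1}" .
  moreover have "\<rho> = real_of_int ((int i+1)*int k - (2*int i+1)*(2*int i+2)) / real_of_int ((2*int i+3)*int k)"
    by (simp add: \<rho>_def r_def q_def I_def K_def m_def p_def algebra_simps)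
  ultimately show ?thesis by simp
qed



theorem theorem25:
  fixes i :: nat
  shows "(\<lambda>k::nat. indep_ratio {1, k, k + 2*i + 1})
           \<longlonglongrightarrow> ereal ((real i + 1) / (2 * real i + 3))"
proof -
  define L where "L = (real i + 1) / (2 * real i + 3)"
  define c where "c = (2*real i+1)*(2*real i+2)/(2*real i+3)"
  define lo where "lo k = real_of_int ((int i+1)*int k - (2*int i+1)*(2*int i+2)) / real_of_int ((2*int i+3)*int k)" for k :: nat
  have eq: "lo k = L - c * inverse (real k)" if "k > 0" for k
  proof -
    have k0: "real k > 0" using that by simp
    have d0: "2 * real i + 3 > 0" by simp
    have n: "real_of_int ((int i+1)*int k - (2*int i+1)*(2*int i+2)) = (real i+1)*real k - (2*real i+1)*(2*real i+2)" by simp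
    have d: "real_of_int ((2*int i+3)*int k) = (2*real i+3)*real k" by simp
    define x where "x = real i"
    define y where "y = real k"
    have y0: "y \<noteq> 0" using k0 by (simp add: y_def)
    have "((x+1)*y - (2*x+1)*(2*x+2)) / ((2*x+3)*y) = (x+1)*y/((2*x+3)*y) - (2*x+1)*(2*x+2)/((2*x+3)*y)"
      by (rule diff_divide_distrib)
    also have "(x+1)*y/((2*x+3)*y) = (x+1)/(2*x+3)" using y0 by simp
    also have "(2*x+1)*(2*x+2)/((2*x+3)*y) = (2*x+1)*(2*x+2)/(2*x+3) * inverse y"
      by (simp add: divide_inverse inverse_mult_distrib)
    finally show ?thesis unfolding lo_def n d L_def c_def x_def y_def .
  qed
  have "(\<lambda>k. L - c * inverse (real k)) \<longlonglongrightarrow> L - c * 0"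
    by (intro tendsto_intros lim_inverse_n)
  hence "(\<lambda>k. L - c * inverse (real k)) \<longlonglongrightarrow> L" by simp
  hence "lo \<longlonglongrightarrow> L"
  proof (rule Lim_transform_eventually)
    show "\<forall>\<^sub>F k in sequentially. L - c * inverse (real k) = lo k"
      using eventually_gt_at_top[of "0::nat"] by eventually_elim (simp add: eq)
  qed
  hence lo_lim: "(\<lambda>k. ereal (lo k)) \<longlonglongrightarrow> ereal L" by simp
  show ?thesis unfolding L_def[symmetric]
  proof (rule tendsto_sandwich[OF _ _ lo_lim tendsto_const])
    show "\<forall>\<^sub>F k in sequentially. ereal (lo k) \<le> indep_ratio {1, k, k + 2*i + 1}"
      using eventually_ge_at_top[of "(2*i+1)*(2*i+3)"]
      by eventually_elim (use lower in \<open>simp add: lo_def\<close>)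
    show "\<forall>\<^sub>F k in sequentially. indep_ratio {1, k, k + 2*i + 1} \<le> ereal L"
      using eventually_ge_at_top[of "1::nat"]
      by eventually_elim (use upper in \<open>simp add: L_def\<close>)
  qed
qed

end
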